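(* Let $G\in\mathbb{R}^{n\times n}$ be symmetric positive semidefinite. Let $S$ be a random matrix with a finite discrete distribution, $S=S_i\in\mathbb{R}^{n\times q_i}$ with probability $p_i>0$ for $i=1,\dots,r$, and let $\mathbb{S}\eqdef[S_1,\dots,S_r]\in\mathbb{R}^{n\times\sum_i q_i}$. If $$p_i=\frac{\mathrm{Tr}(S_i^\top G^2 S_i)}{\mathrm{Tr}(\mathbb{S}^\top G^2\mathbb{S})},\qquad i=1,\dots,r,$$ then $$\lambda_{\min}^+\Big(G\,\mathbb{E}\big[S(S^\top G^2 S)^\dagger S^\top\big]\,G\Big)\ \ge\ \frac{\lambda_{\min}^+(\mathbb{S}^\top G^2\mathbb{S})}{\mathrm{Tr}(\mathbb{S}^\top G^2\mathbb{S})}.$$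
   Context: $M^\dagger$ is the Moore–Penrose pseudoinverse; $\lambda_{\min}^+(M)$ is the smallest nonzero eigenvalue of a symmetric positive semidefinite matrix $M$. *)

theory Defs
  imports "Jordan_Normal_Form.Matrix" "Jordan_Normal_Form.Char_Poly"
begin

definition mat_trace :: "'a :: comm_monoid_add mat \<Rightarrow> 'a" where
  "mat_trace A = (\<Sum>i<dim_row A. A $$ (i, i))"

definition sym_psd :: "nat \<Rightarrow> real mat \<Rightarrow> bool" where
  "sym_psd n A \<longleftrightarrow> A \<in> carrier_mat n n \<and> transpose_mat A = A \<and>
     (\<forall>v \<in> carrier_vec n. v \<bullet> (A *\<^sub>v v) \<ge> 0)"

definition pinv :: "real mat \<Rightarrow> real mat" where
  "pinv A = (THE X. X \<in> carrier_mat (dim_col A) (dim_row A) \<and>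
       A * X * A = A \<and> X * A * X = X \<and>
       transpose_mat (A * X) = A * X \<and> transpose_mat (X * A) = X * A)"

definition lambda_min_plus :: "real mat \<Rightarrow> real" where
  "lambda_min_plus M = Min {k. eigenvalue M k \<and> k \<noteq> 0}"

definition append_cols :: "'a mat \<Rightarrow> 'a mat \<Rightarrow> 'a mat" where
  "append_cols A B = mat (dim_row A) (dim_col A + dim_col B)
     (\<lambda>(i, j). if j < dim_col A then A $$ (i, j) else B $$ (i, j - dim_col A))"

(* [S_0, ..., S_{r-1}], each S_i having n rows *)
fun hcat :: "nat \<Rightarrow> (nat \<Rightarrow> 'a :: zero mat) \<Rightarrow> nat \<Rightarrow> 'a mat" where
  "hcat n S 0 = 0\<^sub>m n 0"
| "hcat n S (Suc r) = append_cols (hcat n S r) (S r)"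

definition wsum_mat :: "nat \<Rightarrow> nat \<Rightarrow> 'b set \<Rightarrow> ('b \<Rightarrow> real) \<Rightarrow> ('b \<Rightarrow> real mat) \<Rightarrow> real mat" where
  "wsum_mat n m I w M = mat n m (\<lambda>(j, k). \<Sum>i\<in>I. w i * M i $$ (j, k))"

end

theory Submission
  imports Defs
begin

lemma sprod_self_ge0: "(v::real vec) \<bullet> v \<ge> 0"
  unfolding scalar_prod_def by (auto intro: sum_nonneg)

lemma sprod_self_eq0: assumes "(v::real vec) \<in> carrier_vec n" shows "v \<bullet> v = 0 \<longleftrightarrow> v = 0\<^sub>v n"
proof
  assume h: "v \<bullet> v = 0"
  have "\<forall>i\<in>{0..<dim_vec v}. v $ i * v $ i = 0"
    using h unfolding scalar_prod_def by (subst sum_nonneg_eq_0_iff[symmetric]) auto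
  then show "v = 0\<^sub>v n" using assms by (intro eq_vecI) auto
qed (use assms in auto)

lemma sym_quad: assumes K: "K \<in> carrier_mat n n" and s: "transpose_mat K = K"
  and x: "x \<in> carrier_vec n" and y: "y \<in> carrier_vec n"
  shows "x \<bullet> (K *\<^sub>v y) = (K *\<^sub>v x) \<bullet> (y :: 'a :: comm_semiring_0 vec)"
  using transpose_vec_mult_scalar[OF K y x] s by simp

lemma real_sym_eigen:
  fixes K :: "real mat"
  assumes K: "K \<in> carrier_mat n n" and s: "transpose_mat K = K" and n: "n > 0"
  shows "\<exists>l u. u \<in> carrier_vec n \<and> u \<bullet> u = 1 \<and> K *\<^sub>v u = l \<cdot>\<^sub>v u"
proof -
  define Kc where "Kc = map_mat complex_of_real K"
  have Kc: "Kc \<in> carrier_mat n n" using K unfolding Kc_def by auto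
  obtain as where cp: "char_poly Kc = (\<Prod>a\<leftarrow>as. [:- a, 1:])" and len: "length as = n"
    using char_poly_factorized[OF Kc] by blast
  then obtain a rest where as: "as = a # rest" using n by (cases as) auto
  have "poly (char_poly Kc) a = 0" unfolding cp as by (simp add: poly_prod_list)
  then have "eigenvalue Kc a" using eigenvalue_root_char_poly[OF Kc] by simp
  then obtain w where ev: "eigenvector Kc w a" unfolding eigenvalue_def by blast
  then have w: "w \<in> carrier_vec n" and w0: "w \<noteq> 0\<^sub>v n" and eq: "Kc *\<^sub>v w = a \<cdot>\<^sub>v w"
    unfolding eigenvector_def using Kc by auto
  define x where "x = vec n (\<lambda>i. Re (w $ i))"
  define y where "y = vec n (\<lambda>i. Im (w $ i))"
  have x: "x \<in> carrier_vec n" and y: "y \<in> carrier_vec n" unfolding x_def y_def by auto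
  have comp: "(Kc *\<^sub>v w) $ i = (\<Sum>j\<in>{0..<n}. complex_of_real (K $$ (i,j)) * w $ j)" if i: "i < n" for i
    using i K w unfolding Kc_def by (auto simp: scalar_prod_def)
  have Kx: "(K *\<^sub>v x) $ i = Re a * x $ i - Im a * y $ i" if i: "i < n" for i
  proof -
    have "(K *\<^sub>v x) $ i = (\<Sum>j\<in>{0..<n}. K $$ (i,j) * Re (w $ j))"
      using i K unfolding x_def by (auto simp: scalar_prod_def)
    also have "\<dots> = Re ((Kc *\<^sub>v w) $ i)" unfolding comp[OF i] Re_sum by simp
    also have "\<dots> = Re a * x $ i - Im a * y $ i" unfolding eq using i w x_def y_def by simp
    finally show ?thesis .
  qed
  have Ky: "(K *\<^sub>v y) $ i = Im a * x $ i + Re a * y $ i" if i: "i < n" for i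
  proof -
    have "(K *\<^sub>v y) $ i = (\<Sum>j\<in>{0..<n}. K $$ (i,j) * Im (w $ j))"
      using i K unfolding y_def by (auto simp: scalar_prod_def)
    also have "\<dots> = Im ((Kc *\<^sub>v w) $ i)" unfolding comp[OF i] Im_sum by simp
    also have "\<dots> = Im a * x $ i + Re a * y $ i" unfolding eq using i w x_def y_def by simp
    finally show ?thesis .
  qed
  have e1: "y \<bullet> (K *\<^sub>v x) = Re a * (x \<bullet> y) - Im a * (y \<bullet> y)"
  proof -
    have "y \<bullet> (K *\<^sub>v x) = (\<Sum>i\<in>{0..<n}. y $ i * (Re a * x $ i - Im a * y $ i))"
      unfolding scalar_prod_def using K Kx by (intro sum.cong) auto
    also have "\<dots> = Re a * (x \<bullet> y) - Im a * (y \<bullet> y)"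
      unfolding scalar_prod_def using x y
      by (simp add: sum_subtractf sum_distrib_left algebra_simps)
    finally show ?thesis .
  qed
  have e2: "x \<bullet> (K *\<^sub>v y) = Im a * (x \<bullet> x) + Re a * (x \<bullet> y)"
  proof -
    have "x \<bullet> (K *\<^sub>v y) = (\<Sum>i\<in>{0..<n}. x $ i * (Im a * x $ i + Re a * y $ i))"
      unfolding scalar_prod_def using K Ky by (intro sum.cong) auto
    also have "\<dots> = Im a * (x \<bullet> x) + Re a * (x \<bullet> y)"
      unfolding scalar_prod_def using x y
      by (simp add: sum.distrib sum_distrib_left algebra_simps)
    finally show ?thesis .
  qed
  have "x \<bullet> (K *\<^sub>v y) = y \<bullet> (K *\<^sub>v x)"
    using sym_quad[OF K s x y] comm_scalar_prod[OF _ y, of "K *\<^sub>v x"] K x by auto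
  then have b0: "Im a * (x \<bullet> x + y \<bullet> y) = 0" using e1 e2 by (simp add: algebra_simps)
  have pos: "x \<bullet> x + y \<bullet> y > 0"
  proof -
    obtain i where i: "i < n" and wi: "w $ i \<noteq> 0" using w0 w by (metis eq_vecI carrier_vecD index_zero_vec)
    then have "x $ i \<noteq> 0 \<or> y $ i \<noteq> 0" using complex_eqI[of "w $ i" 0] unfolding x_def y_def by auto
    then have "x \<noteq> 0\<^sub>v n \<or> y \<noteq> 0\<^sub>v n" using i by auto
    then have "x \<bullet> x \<noteq> 0 \<or> y \<bullet> y \<noteq> 0" using sprod_self_eq0 x y by blast
    then show ?thesis using sprod_self_ge0[of x] sprod_self_ge0[of y] by linarith
  qed
  have Im0: "Im a = 0" using b0 pos by simp
  have Kx': "K *\<^sub>v x = Re a \<cdot>\<^sub>v x" using Kx Im0 K x by (intro eq_vecI) auto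
  have Ky': "K *\<^sub>v y = Re a \<cdot>\<^sub>v y" using Ky Im0 K y by (intro eq_vecI) auto
  obtain v where v: "v \<in> carrier_vec n" "v \<bullet> v > 0" "K *\<^sub>v v = Re a \<cdot>\<^sub>v v"
  proof (cases "x \<bullet> x > 0")
    case True then show ?thesis using that x Kx' by blast
  next
    case False
    then have "y \<bullet> y > 0" using pos sprod_self_ge0[of x] by linarith
    then show ?thesis using that y Ky' by blast
  qed
  define u where "u = (1 / sqrt (v \<bullet> v)) \<cdot>\<^sub>v v"
  have u: "u \<in> carrier_vec n" unfolding u_def using v by auto
  have "u \<bullet> u = (1 / sqrt (v \<bullet> v)) * (1 / sqrt (v \<bullet> v)) * (v \<bullet> v)"
    unfolding u_def using v by (simp add: smult_scalar_prod_distrib scalar_prod_smult_distrib[of _ n] )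
  also have "\<dots> = 1" using v(2) by (simp add: field_simps)
  finally have uu: "u \<bullet> u = 1" .
  have "K *\<^sub>v u = Re a \<cdot>\<^sub>v u" unfolding u_def using mult_mat_vec[OF K v(1)] v(3) 
    by (simp add: smult_smult_assoc mult.commute)
  then show ?thesis using u uu by blast
qed

lemma householder:
  fixes u :: "real vec"
  assumes u: "u \<in> carrier_vec n" and uu: "u \<bullet> u = 1" and n: "n > 0"
  shows "\<exists>H. H \<in> carrier_mat n n \<and> transpose_mat H * H = 1\<^sub>m n \<and> H * transpose_mat H = 1\<^sub>m n
            \<and> col H 0 = u"
proof -
  define h where "h = vec n (\<lambda>i. u $ i - (if i = 0 then 1 else 0))"
  define c where "c = 2 / (h \<bullet> h)"
  define H where "H = mat n n (\<lambda>(i,j). (if i = j then 1 else 0) - c * h $ i * h $ j)"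
  have H: "H \<in> carrier_mat n n" unfolding H_def by auto
  have HT: "transpose_mat H = H" unfolding H_def by (intro eq_matI) auto
  have hh: "h \<bullet> h = (\<Sum>k\<in>{0..<n}. h $ k * h $ k)" unfolding h_def scalar_prod_def by simp
  have cc: "c * c * (h \<bullet> h) = 2 * c"
  proof (cases "h \<bullet> h = 0")
    case True then show ?thesis unfolding c_def by simp
  next
    case False then show ?thesis unfolding c_def by (simp add: field_simps)
  qed
  have HH: "H * H = 1\<^sub>m n"
  proof (rule eq_matI)
    fix i j assume i: "i < dim_row (1\<^sub>m n)" and j: "j < dim_col (1\<^sub>m n)"
    then have i: "i < n" and j: "j < n" by auto
    have "(H * H) $$ (i, j) = (\<Sum>k\<in>{0..<n}. ((if i = k then 1 else 0) - c * h $ i * h $ k)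
                 * ((if k = j then 1 else 0) - c * h $ k * h $ j))"
      using i j unfolding H_def by (auto simp: scalar_prod_def intro!: sum.cong)
    also have "\<dots> = (\<Sum>k\<in>{0..<n}. (if i = k then (if k = j then 1 else 0) else 0)
         - (if i = k then c * h $ k * h $ j else 0) - (if k = j then c * h $ i * h $ k else 0)
         + c * c * h $ i * h $ j * (h $ k * h $ k))"
      by (intro sum.cong) (auto simp: algebra_simps)
    also have "\<dots> = (if i = j then 1 else 0) - c * h $ i * h $ j - c * h $ i * h $ j
         + c * c * h $ i * h $ j * (h \<bullet> h)"
      using i j unfolding hh by (simp add: sum.distrib sum_subtractf sum_distrib_left)
    also have "\<dots> = (if i = j then 1 else 0)" using cc by (simp add: algebra_simps) blast
    finally show "(H * H) $$ (i, j) = 1\<^sub>m n $$ (i, j)" using i j by simp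
  qed (auto simp: H_def)
  have hh2: "h \<bullet> h = - 2 * h $ 0"
  proof -
    have "h \<bullet> h = (\<Sum>k\<in>{0..<n}. u $ k * u $ k - 2 * (if k = 0 then u $ k else 0) + (if k = 0 then 1 else 0))"
      unfolding hh using n by (intro sum.cong) (auto simp: h_def algebra_simps)
    also have "\<dots> = u \<bullet> u - (\<Sum>k\<in>{0..<n}. 2 * (if k = 0 then u $ k else 0)) + 1" using n u
      by (simp add: sum.distrib sum_subtractf scalar_prod_def)
    also have "(\<Sum>k\<in>{0..<n}. 2 * (if k = 0 then u $ k else 0)) = 2 * u $ 0"
      by (subst sum_distrib_left[symmetric]) (use n in simp)
    finally show ?thesis using uu n unfolding h_def by simp
  qed
  have colH: "col H 0 = u"
  proof (rule eq_vecI)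
    fix i assume "i < dim_vec u" then have i: "i < n" using u by auto
    show "col H 0 $ i = u $ i"
    proof (cases "h $ 0 = 0")
      case True
      then have "h \<bullet> h = 0" using hh2 by simp
      then have "h = 0\<^sub>v n" using sprod_self_eq0[of h n] unfolding h_def by auto
      then have "h $ i = 0" using i by simp
      then show ?thesis using i n unfolding H_def c_def h_def by (auto split: if_splits)
    next
      case False
      then have "c * h $ 0 = -1" unfolding c_def hh2 by (simp add: field_simps)
      then have ch: "c * h $ i * h $ 0 = - h $ i"
        by (metis mult.assoc mult.commute mult_minus_left mult_1)
      have "col H 0 $ i = (if i = 0 then 1 else 0) - c * h $ i * h $ 0" using i n unfolding H_def by simp
      then have "col H 0 $ i = (if i = 0 then 1 else 0) + h $ i" using ch by simp
      then show ?thesis using i unfolding h_def by auto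
    qed
  qed (use u H in auto)
  show ?thesis using H HT HH colH by auto
qed

lemma mat_diag_dims[simp]: "dim_row (mat_diag n f) = n" "dim_col (mat_diag n f) = n"
  by (auto simp: mat_diag_def)

lemma fb_mult:
  assumes A: "A \<in> carrier_mat 1 1" and A': "A' \<in> carrier_mat 1 1"
    and D: "D \<in> carrier_mat m m" and D': "D' \<in> carrier_mat m m"
  shows "four_block_mat A (0\<^sub>m 1 m) (0\<^sub>m m 1) D * four_block_mat A' (0\<^sub>m 1 m) (0\<^sub>m m 1) D'
     = four_block_mat (A * A') (0\<^sub>m 1 m) (0\<^sub>m m 1) (D * (D' :: 'a :: comm_ring_1 mat))"
  by (subst mult_four_block_mat[OF A _ _ D A' _ _ D']) (use A A' D D' in auto)

lemma assoc4: assumes A: "A \<in> carrier_mat n n" and B: "B \<in> carrier_mat n n"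
  and C: "C \<in> carrier_mat n n" and D: "D \<in> carrier_mat n n"
  shows "(A * B) * (C * D) = A * ((B * C) * (D :: 'a :: comm_ring_1 mat))"
  using assoc_mult_mat[OF A B mult_carrier_mat[OF C D]] assoc_mult_mat[OF B C D] by simp

lemma assoc5: assumes A: "A \<in> carrier_mat n n" and B: "B \<in> carrier_mat n n"
  and C: "C \<in> carrier_mat n n" and D: "D \<in> carrier_mat n n" and E: "E \<in> carrier_mat n n"
  shows "(A * B) * D * (C * E) = A * (B * D * C) * (E :: 'a :: comm_ring_1 mat)"
proof -
  have BD: "B * D \<in> carrier_mat n n" using B D by auto
  have CE: "C * E \<in> carrier_mat n n" using C E by auto
  have AB: "A * B \<in> carrier_mat n n" using A B by auto
  have BDC: "B * D * C \<in> carrier_mat n n" using B D C by auto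
  have DCE: "D * (C * E) \<in> carrier_mat n n" using D C E by auto
  show ?thesis
    using assoc_mult_mat[OF AB D CE] assoc_mult_mat[OF A B DCE] assoc_mult_mat[OF A BDC E]
      assoc_mult_mat[OF BD C E] assoc_mult_mat[OF B D CE] by simp
qed

lemma spectral:
  fixes K :: "real mat"
  assumes "K \<in> carrier_mat n n" "transpose_mat K = K"
  shows "\<exists>Q d. Q \<in> carrier_mat n n \<and> transpose_mat Q * Q = 1\<^sub>m n \<and> Q * transpose_mat Q = 1\<^sub>m n
            \<and> K = Q * mat_diag n d * transpose_mat Q"
  using assms
proof (induction n arbitrary: K)
  case 0
  show ?case by (rule exI[of _ "1\<^sub>m 0"], rule exI[of _ "\<lambda>_. 0"]) (use 0 in \<open>auto intro!: eq_matI\<close>)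
next
  case (Suc m)
  let ?n = "Suc m"
  from Suc.prems have K: "K \<in> carrier_mat ?n ?n" and s: "transpose_mat K = K" by auto
  obtain l u where u: "u \<in> carrier_vec ?n" "u \<bullet> u = 1" and Ku: "K *\<^sub>v u = l \<cdot>\<^sub>v u"
    using real_sym_eigen[OF K s] by auto
  obtain H where H: "H \<in> carrier_mat ?n ?n" and HTH: "transpose_mat H * H = 1\<^sub>m ?n"
    and HHT: "H * transpose_mat H = 1\<^sub>m ?n" and cH: "col H 0 = u"
    using householder[OF u] by auto
  define B where "B = transpose_mat H * K * H"
  have HT: "transpose_mat H \<in> carrier_mat ?n ?n" using H by auto
  have B: "B \<in> carrier_mat ?n ?n" unfolding B_def using H K by auto
  have BT: "transpose_mat B = B"
  proof -
    have "transpose_mat B = transpose_mat H * transpose_mat (transpose_mat H * K)"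
      unfolding B_def by (rule transpose_mult[of _ ?n ?n]) (use H K in auto)
    also have "transpose_mat (transpose_mat H * K) = transpose_mat K * H"
      by (subst transpose_mult[of _ ?n ?n]) (use H K in auto)
    finally show ?thesis unfolding B_def s using H K by simp
  qed
  have colB: "col B 0 = l \<cdot>\<^sub>v unit_vec ?n 0"
  proof -
    have "col B 0 = (transpose_mat H * K) *\<^sub>v col H 0"
      unfolding B_def by (rule col_mult2) (use H K in auto)
    also have "\<dots> = transpose_mat H *\<^sub>v (K *\<^sub>v u)" using H K u cH by simp
    also have "\<dots> = l \<cdot>\<^sub>v (transpose_mat H *\<^sub>v col H 0)" unfolding Ku using mult_mat_vec[OF HT u(1)] cH by simp
    also have "transpose_mat H *\<^sub>v col H 0 = col (transpose_mat H * H) 0"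
      by (rule col_mult2[symmetric]) (use H in auto)
    finally show ?thesis unfolding HTH by simp
  qed
  have B0: "B $$ (i,0) = (if i = 0 then l else 0)" if i: "i < ?n" for i
  proof -
    have "B $$ (i,0) = col B 0 $ i" using B i by simp
    then show ?thesis unfolding colB using i by simp
  qed
  have B0': "B $$ (0,j) = (if j = 0 then l else 0)" if j: "j < ?n" for j
  proof -
    have "B $$ (0,j) = transpose_mat B $$ (j,0)" using B j by simp
    then show ?thesis using BT B0[OF j] by simp
  qed
  define K' where "K' = mat m m (\<lambda>(i,j). B $$ (Suc i, Suc j))"
  have K': "K' \<in> carrier_mat m m" unfolding K'_def by simp
  have K's: "transpose_mat K' = K'"
  proof (rule eq_matI)
    fix i j assume "i < dim_row K'" "j < dim_col K'"
    then have i: "i < m" and j: "j < m" using K' by auto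
    have "B $$ (Suc j, Suc i) = transpose_mat B $$ (Suc i, Suc j)" using B i j by simp
    then show "transpose_mat K' $$ (i, j) = K' $$ (i, j)" unfolding K'_def using i j BT by simp
  qed (use K' in auto)
  obtain Q' d' where Q': "Q' \<in> carrier_mat m m" and Q'TQ': "transpose_mat Q' * Q' = 1\<^sub>m m"
    and Q'Q'T: "Q' * transpose_mat Q' = 1\<^sub>m m" and K'eq: "K' = Q' * mat_diag m d' * transpose_mat Q'"
    using Suc.IH[OF K' K's] by auto
  define Q1 where "Q1 = four_block_mat (1\<^sub>m 1) (0\<^sub>m 1 m) (0\<^sub>m m 1) Q'"
  define d where "d = (\<lambda>j. if j = 0 then l else d' (j - 1))"
  have Q1: "Q1 \<in> carrier_mat ?n ?n" unfolding Q1_def using Q' by auto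
  have Q'T: "transpose_mat Q' \<in> carrier_mat m m" using Q' by auto
  have Q1T: "transpose_mat Q1 = four_block_mat (1\<^sub>m 1) (0\<^sub>m 1 m) (0\<^sub>m m 1) (transpose_mat Q')"
    unfolding Q1_def by (subst transpose_four_block_mat) (use Q' in auto)
  have Dsplit: "mat_diag ?n d = four_block_mat (mat_diag 1 (\<lambda>_. l)) (0\<^sub>m 1 m) (0\<^sub>m m 1) (mat_diag m d')"
    by (rule eq_matI) (auto simp: mat_diag_def d_def)
  have Bsplit: "B = four_block_mat (mat_diag 1 (\<lambda>_. l)) (0\<^sub>m 1 m) (0\<^sub>m m 1) K'"
  proof (rule eq_matI)
    fix i j assume "i < dim_row (four_block_mat (mat_diag 1 (\<lambda>_. l)) (0\<^sub>m 1 m) (0\<^sub>m m 1) K')"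
      "j < dim_col (four_block_mat (mat_diag 1 (\<lambda>_. l)) (0\<^sub>m 1 m) (0\<^sub>m m 1) K')"
    then have i: "i < ?n" and j: "j < ?n" using K' by (auto simp: mat_diag_def)
    show "B $$ (i, j) = four_block_mat (mat_diag 1 (\<lambda>_. l)) (0\<^sub>m 1 m) (0\<^sub>m m 1) K' $$ (i, j)"
    proof (cases "i = 0")
      case True then show ?thesis using B0'[OF j] i j K' by (auto simp: mat_diag_def)
    next
      case False
      show ?thesis
      proof (cases "j = 0")
        case True then show ?thesis using B0[OF i] i j K' False by (auto simp: mat_diag_def)
      next
        case False2: False
        then show ?thesis using i j K' False unfolding K'_def
          by (cases i; cases j) (auto simp: mat_diag_def)
      qed
    qed
  qed (use B K' in auto)
  have Bdec: "Q1 * mat_diag ?n d * transpose_mat Q1 = B"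
    unfolding Q1T unfolding Dsplit Bsplit Q1_def K'eq
    by (subst fb_mult, (use Q' in auto)[4], subst fb_mult, (use Q' in auto)[4]) (use Q' in simp)
  have Q1TQ1: "transpose_mat Q1 * Q1 = 1\<^sub>m ?n"
    unfolding Q1T unfolding Q1_def
    by (subst fb_mult, (use Q' in auto)[4]) (use Q' Q'TQ' in simp)
  have Q1Q1T: "Q1 * transpose_mat Q1 = 1\<^sub>m ?n"
    unfolding Q1T unfolding Q1_def
    by (subst fb_mult, (use Q' in auto)[4]) (use Q' Q'Q'T in simp)
  define Q where "Q = H * Q1"
  define Ht where "Ht = transpose_mat H"
  define Q1t where "Q1t = transpose_mat Q1"
  have Ht: "Ht \<in> carrier_mat ?n ?n" and Q1t: "Q1t \<in> carrier_mat ?n ?n"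
    unfolding Ht_def Q1t_def using H Q1 by auto
  have Q: "Q \<in> carrier_mat ?n ?n" unfolding Q_def using H Q1 by auto
  have QT: "transpose_mat Q = Q1t * Ht"
    unfolding Q_def Q1t_def Ht_def by (rule transpose_mult) (use H Q1 in auto)
  have HTH': "Ht * H = 1\<^sub>m ?n" and HHT': "H * Ht = 1\<^sub>m ?n" using HTH HHT unfolding Ht_def by auto
  have Q1TQ1': "Q1t * Q1 = 1\<^sub>m ?n" and Q1Q1T': "Q1 * Q1t = 1\<^sub>m ?n"
    using Q1TQ1 Q1Q1T unfolding Q1t_def by auto
  have Bdec': "Q1 * mat_diag ?n d * Q1t = Ht * K * H" using Bdec unfolding B_def Q1t_def Ht_def .
  have "transpose_mat Q * Q = Q1t * ((Ht * H) * Q1)"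
    unfolding QT unfolding Q_def by (rule assoc4[OF Q1t Ht H Q1])
  then have QTQ: "transpose_mat Q * Q = 1\<^sub>m ?n" unfolding HTH' using Q1 Q1TQ1' by simp
  have "Q * transpose_mat Q = H * ((Q1 * Q1t) * Ht)"
    unfolding QT unfolding Q_def by (rule assoc4[OF H Q1 Q1t Ht])
  then have QQT: "Q * transpose_mat Q = 1\<^sub>m ?n" unfolding Q1Q1T' using H Ht HHT' by simp
  have "Q * mat_diag ?n d * transpose_mat Q = H * (Q1 * mat_diag ?n d * Q1t) * Ht"
    unfolding QT unfolding Q_def by (rule assoc5[OF H Q1 Q1t mat_diag_dim Ht])
  also have "\<dots> = (H * Ht) * K * (H * Ht)"
    unfolding Bdec' by (rule assoc5[OF H Ht H K Ht, symmetric])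
  also have "\<dots> = K" unfolding HHT' using K by simp
  finally show ?case using Q QTQ QQT by metis
qed

lemma diag_mult_vec: assumes y: "y \<in> carrier_vec n"
  shows "mat_diag n d *\<^sub>v y = vec n (\<lambda>k. d k * y $ k)"
proof (rule eq_vecI)
  fix k assume "k < dim_vec (vec n (\<lambda>k. d k * y $ k))"
  then have k: "k < n" by simp
  have "(mat_diag n d *\<^sub>v y) $ k = (\<Sum>j\<in>{0..<n}. (if k = j then d j else 0) * y $ j)"
    using k y by (simp add: mat_diag_def scalar_prod_def)
  also have "\<dots> = (\<Sum>j\<in>{0..<n}. if k = j then d j * y $ j else 0)" by (intro sum.cong) auto
  also have "\<dots> = d k * y $ k" using k by simp
  finally show "(mat_diag n d *\<^sub>v y) $ k = vec n (\<lambda>k. d k * y $ k) $ k" using k by simp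
qed simp

lemma mat_diag_transpose[simp]: "transpose_mat (mat_diag n d) = mat_diag n d"
  by (rule eq_matI) (auto simp: mat_diag_def)

context
  fixes Q :: "real mat" and n :: nat
  assumes Q: "Q \<in> carrier_mat n n" and QTQ: "transpose_mat Q * Q = 1\<^sub>m n"
    and QQT: "Q * transpose_mat Q = 1\<^sub>m n"
begin

lemma Qt: "transpose_mat Q \<in> carrier_mat n n" using Q by auto

lemma colQ_sprod: assumes i: "i < n" and j: "j < n"
  shows "col Q i \<bullet> col Q j = (if i = j then 1 else 0)"
proof -
  have "(transpose_mat Q * Q) $$ (i,j) = row (transpose_mat Q) i \<bullet> col Q j"
    using Q i j by (intro index_mult_mat) auto
  then show ?thesis using QTQ i j Q by simp
qed

lemma colQ_carrier: "col Q k \<in> carrier_vec n" using Q by auto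

lemma QT_col: assumes k: "k < n" shows "transpose_mat Q *\<^sub>v col Q k = unit_vec n k"
proof -
  have "col (transpose_mat Q * Q) k = transpose_mat Q *\<^sub>v col Q k"
    by (rule col_mult2) (use Q k in auto)
  then show ?thesis using QTQ k by simp
qed

lemma Q_unit: assumes k: "k < n" shows "Q *\<^sub>v unit_vec n k = col Q k"
proof -
  have "col (Q * 1\<^sub>m n) k = Q *\<^sub>v col (1\<^sub>m n) k"
    by (rule col_mult2) (use Q k in auto)
  then show ?thesis using Q k by simp
qed

lemma spec_mult_vec: assumes v: "v \<in> carrier_vec n"
  shows "(Q * mat_diag n d * transpose_mat Q) *\<^sub>v v = Q *\<^sub>v (mat_diag n d *\<^sub>v (transpose_mat Q *\<^sub>v v))"
proof -
  have QD: "Q * mat_diag n d \<in> carrier_mat n n" using Q by auto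
  have "(Q * mat_diag n d * transpose_mat Q) *\<^sub>v v = (Q * mat_diag n d) *\<^sub>v (transpose_mat Q *\<^sub>v v)"
    using assoc_mult_mat_vec[OF QD Qt v] .
  also have "\<dots> = Q *\<^sub>v (mat_diag n d *\<^sub>v (transpose_mat Q *\<^sub>v v))"
    by (rule assoc_mult_mat_vec[OF Q mat_diag_dim]) (use Qt v in auto)
  finally show ?thesis .
qed

lemma spec_eig: assumes k: "k < n"
  shows "(Q * mat_diag n d * transpose_mat Q) *\<^sub>v col Q k = d k \<cdot>\<^sub>v col Q k"
proof -
  have "mat_diag n d *\<^sub>v unit_vec n k = d k \<cdot>\<^sub>v unit_vec n k"
    using k by (subst diag_mult_vec) (auto intro!: eq_vecI)
  then show ?thesis unfolding spec_mult_vec[OF colQ_carrier] QT_col[OF k]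
    using mult_mat_vec[OF Q, of "unit_vec n k" "d k"] Q_unit[OF k] by simp
qed

lemma QTv: assumes v: "v \<in> carrier_vec n" and k: "k < n"
  shows "(transpose_mat Q *\<^sub>v v) $ k = col Q k \<bullet> v"
  using Q k v by simp

lemma spec_quad: assumes v: "v \<in> carrier_vec n"
  shows "v \<bullet> ((Q * mat_diag n d * transpose_mat Q) *\<^sub>v v) = (\<Sum>k\<in>{0..<n}. d k * (col Q k \<bullet> v)^2)"
proof -
  define y where "y = transpose_mat Q *\<^sub>v v"
  have y: "y \<in> carrier_vec n" unfolding y_def using Q v by auto
  have Dy: "mat_diag n d *\<^sub>v y \<in> carrier_vec n" by (rule mult_mat_vec_carrier[OF mat_diag_dim y])
  have "v \<bullet> ((Q * mat_diag n d * transpose_mat Q) *\<^sub>v v) = v \<bullet> (Q *\<^sub>v (mat_diag n d *\<^sub>v y))"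
    unfolding spec_mult_vec[OF v] y_def ..
  also have "\<dots> = y \<bullet> (mat_diag n d *\<^sub>v y)"
    using transpose_vec_mult_scalar[OF Q Dy v] unfolding y_def[symmetric] by simp
  also have "\<dots> = (\<Sum>k\<in>{0..<n}. y $ k * (d k * y $ k))"
    unfolding diag_mult_vec[OF y] scalar_prod_def by simp
  also have "\<dots> = (\<Sum>k\<in>{0..<n}. d k * (col Q k \<bullet> v)^2)"
    by (intro sum.cong) (auto simp: y_def QTv[OF v] power2_eq_square)
  finally show ?thesis .
qed

lemma spec_norm: assumes v: "v \<in> carrier_vec n"
  shows "v \<bullet> v = (\<Sum>k\<in>{0..<n}. (col Q k \<bullet> v)^2)"
proof -
  have "Q * mat_diag n (\<lambda>_. 1) * transpose_mat Q = 1\<^sub>m n" using Q QQT by simp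
  then show ?thesis using spec_quad[OF v, of "\<lambda>_. 1"] v by simp
qed

lemma spec_mult: "(Q * mat_diag n d * transpose_mat Q) * (Q * mat_diag n e * transpose_mat Q)
    = Q * mat_diag n (\<lambda>k. d k * e k) * transpose_mat Q"
proof -
  define Qt where "Qt = transpose_mat Q"
  have Qt': "Qt \<in> carrier_mat n n" unfolding Qt_def by (rule Qt)
  have QtQ: "Qt * Q = 1\<^sub>m n" unfolding Qt_def by (rule QTQ)
  define D where "D = mat_diag n d"
  define E where "E = mat_diag n e"
  have D: "D \<in> carrier_mat n n" and E: "E \<in> carrier_mat n n" unfolding D_def E_def by auto
  have QD: "Q * D \<in> carrier_mat n n" and QE: "Q * E \<in> carrier_mat n n" and EQt: "E * Qt \<in> carrier_mat n n"
    using Q D E Qt' by auto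
  have QEQt: "Q * E * Qt \<in> carrier_mat n n" using QE Qt' by auto
  have "(Q * D * Qt) * (Q * E * Qt) = (Q * D) * (Qt * (Q * E * Qt))"
    by (rule assoc_mult_mat[OF QD Qt' QEQt])
  also have "Qt * (Q * E * Qt) = (Qt * (Q * E)) * Qt"
    by (rule assoc_mult_mat[OF Qt' QE Qt', symmetric])
  also have "Qt * (Q * E) = (Qt * Q) * E" by (rule assoc_mult_mat[OF Qt' Q E, symmetric])
  also have "(Qt * Q) * E = E" unfolding QtQ using E by simp
  also have "(Q * D) * (E * Qt) = Q * (D * (E * Qt))" by (rule assoc_mult_mat[OF Q D EQt])
  also have "D * (E * Qt) = (D * E) * Qt" by (rule assoc_mult_mat[OF D E Qt', symmetric])
  also have "Q * ((D * E) * Qt) = Q * (D * E) * Qt"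
    by (rule assoc_mult_mat[OF Q _ Qt', symmetric]) (use D E in auto)
  finally show ?thesis unfolding D_def E_def Qt_def by simp
qed

lemma spec_transpose: "transpose_mat (Q * mat_diag n d * transpose_mat Q) = Q * mat_diag n d * transpose_mat Q"
proof -
  have QD: "Q * mat_diag n d \<in> carrier_mat n n" using Q by auto
  have "transpose_mat (Q * mat_diag n d * transpose_mat Q) = Q * transpose_mat (Q * mat_diag n d)"
    by (subst transpose_mult[OF QD Qt]) simp
  also have "transpose_mat (Q * mat_diag n d) = mat_diag n d * transpose_mat Q"
    by (subst transpose_mult[OF Q mat_diag_dim]) simp
  also have "Q * (mat_diag n d * transpose_mat Q) = Q * mat_diag n d * transpose_mat Q"
    by (rule assoc_mult_mat[OF Q mat_diag_dim Qt, symmetric])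
  finally show ?thesis .
qed

lemma spec_carrier: "Q * mat_diag n d * transpose_mat Q \<in> carrier_mat n n" using Q by auto

lemma spec_trace: "mat_trace (Q * mat_diag n d * transpose_mat Q) = (\<Sum>k\<in>{0..<n}. d k)"
proof -
  have QD: "Q * mat_diag n d = mat n n (\<lambda>(i,j). Q $$ (i,j) * d j)"
    by (rule mat_diag_mult_right[OF Q])
  have ent: "(Q * mat_diag n d * transpose_mat Q) $$ (i,i) = (\<Sum>k\<in>{0..<n}. d k * (Q $$ (i,k) * Q $$ (i,k)))"
    if i: "i < n" for i
    unfolding QD using i Q by (auto simp: scalar_prod_def intro!: sum.cong)
  have "mat_trace (Q * mat_diag n d * transpose_mat Q) = (\<Sum>i\<in>{0..<n}. (Q * mat_diag n d * transpose_mat Q) $$ (i,i))"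
    unfolding mat_trace_def using Q by (simp add: atLeast0LessThan)
  also have "\<dots> = (\<Sum>i\<in>{0..<n}. \<Sum>k\<in>{0..<n}. d k * (Q $$ (i,k) * Q $$ (i,k)))"
    by (rule sum.cong[OF refl], rule ent) auto
  also have "\<dots> = (\<Sum>k\<in>{0..<n}. d k * (col Q k \<bullet> col Q k))"
    by (subst sum.swap) (use Q in \<open>auto simp: scalar_prod_def sum_distrib_left intro!: sum.cong\<close>)
  also have "\<dots> = (\<Sum>k\<in>{0..<n}. d k)" by (intro sum.cong) (auto simp: colQ_sprod)
  finally show ?thesis .
qed

lemma spec_psd_nonneg: assumes psd: "\<And>v. v \<in> carrier_vec n \<Longrightarrow> v \<bullet> ((Q * mat_diag n d * transpose_mat Q) *\<^sub>v v) \<ge> 0"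
  and k: "k < n" shows "d k \<ge> 0"
proof -
  have "col Q k \<bullet> ((Q * mat_diag n d * transpose_mat Q) *\<^sub>v col Q k) = d k"
    unfolding spec_eig[OF k] using colQ_sprod[OF k k] colQ_carrier[of k] by simp
  then show ?thesis using psd[OF colQ_carrier[of k]] by simp
qed

lemma spec_rayleigh:
  assumes d0: "\<And>k. k < n \<Longrightarrow> d k \<ge> 0" and v: "v \<in> carrier_vec n" and v0: "v \<noteq> 0\<^sub>v n"
    and ker: "\<And>k. k < n \<Longrightarrow> d k = 0 \<Longrightarrow> col Q k \<bullet> v = 0"
  shows "\<exists>k<n. d k > 0 \<and> d k * (v \<bullet> v) \<le> v \<bullet> ((Q * mat_diag n d * transpose_mat Q) *\<^sub>v v)"
proof -
  define S where "S = {k\<in>{0..<n}. d k \<noteq> 0}"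
  have vv: "v \<bullet> v \<noteq> 0" using sprod_self_eq0[OF v] v0 by simp
  have "S \<noteq> {}"
  proof
    assume "S = {}"
    then have "\<forall>k\<in>{0..<n}. (col Q k \<bullet> v)^2 = 0" using ker unfolding S_def by auto
    then have "v \<bullet> v = 0" unfolding spec_norm[OF v] by simp
    then show False using vv by simp
  qed
  have fS: "finite S" unfolding S_def by simp
  define m where "m = Min (d ` S)"
  have mS: "m \<in> d ` S" unfolding m_def using fS \<open>S \<noteq> {}\<close> by (intro Min_in) auto
  then obtain k where kS: "k \<in> S" and mk: "m = d k" by auto
  have kn: "k < n" and dk: "d k > 0" using kS d0 unfolding S_def by force+
  have le: "m \<le> d j" if "j \<in> S" for j unfolding m_def using fS that by simp
  have "d k * (v \<bullet> v) = (\<Sum>j\<in>{0..<n}. d k * (col Q j \<bullet> v)^2)"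
    unfolding spec_norm[OF v] sum_distrib_left ..
  also have "\<dots> \<le> (\<Sum>j\<in>{0..<n}. d j * (col Q j \<bullet> v)^2)"
  proof (rule sum_mono)
    fix j assume j: "j \<in> {0..<n}"
    show "d k * (col Q j \<bullet> v)^2 \<le> d j * (col Q j \<bullet> v)^2"
    proof (cases "d j = 0")
      case True then show ?thesis using ker j by simp
    next
      case False then have "j \<in> S" using j unfolding S_def by auto
      then show ?thesis using le mk by (intro mult_right_mono) auto
    qed
  qed
  finally show ?thesis unfolding spec_quad[OF v] using kn dk by blast
qed

lemma spec_block:
  assumes d0: "\<And>k. k < n \<Longrightarrow> d k \<ge> 0" and z: "z \<in> carrier_vec n"
    and ker: "\<And>k. k < n \<Longrightarrow> d k = 0 \<Longrightarrow> col Q k \<bullet> z = 0"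
  shows "z \<bullet> z \<le> (\<Sum>k\<in>{0..<n}. d k) *
     (z \<bullet> ((Q * mat_diag n (\<lambda>k. if d k = 0 then 0 else 1 / d k) * transpose_mat Q) *\<^sub>v z))"
proof -
  let ?t = "\<Sum>k\<in>{0..<n}. d k"
  have "z \<bullet> z = (\<Sum>k\<in>{0..<n}. (col Q k \<bullet> z)^2)" by (rule spec_norm[OF z])
  also have "\<dots> \<le> (\<Sum>k\<in>{0..<n}. ?t * ((if d k = 0 then 0 else 1 / d k) * (col Q k \<bullet> z)^2))"
  proof (rule sum_mono)
    fix k assume k: "k \<in> {0..<n}"
    show "(col Q k \<bullet> z)^2 \<le> ?t * ((if d k = 0 then 0 else 1 / d k) * (col Q k \<bullet> z)^2)"
    proof (cases "d k = 0")
      case True then show ?thesis using ker k by simp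
    next
      case False
      then have dk: "d k > 0" using d0 k by force
      have "d k \<le> ?t" using k d0 by (intro member_le_sum) auto
      then have "1 \<le> ?t * (1 / d k)" using dk by (simp add: field_simps)
      then have "1 * (col Q k \<bullet> z)^2 \<le> (?t * (1 / d k)) * (col Q k \<bullet> z)^2"
        by (intro mult_right_mono) auto
      then show ?thesis using False by (simp add: algebra_simps)
    qed
  qed
  also have "\<dots> = ?t * (z \<bullet> ((Q * mat_diag n (\<lambda>k. if d k = 0 then 0 else 1 / d k) * transpose_mat Q) *\<^sub>v z))"
    unfolding spec_quad[OF z] sum_distrib_left ..
  finally show ?thesis .
qed

lemma spec_quad_nonneg: assumes d0: "\<And>k. k < n \<Longrightarrow> d k \<ge> 0" and v: "v \<in> carrier_vec n"
  shows "v \<bullet> ((Q * mat_diag n d * transpose_mat Q) *\<^sub>v v) \<ge> 0"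
  unfolding spec_quad[OF v] using d0 by (intro sum_nonneg) auto

end

lemma pinv_unique_sq:
  fixes A X Y :: "real mat"
  assumes A: "A \<in> carrier_mat n n" and X: "X \<in> carrier_mat n n" and Y: "Y \<in> carrier_mat n n"
    and x1: "A * X * A = A" and x2: "X * A * X = X" and x3: "transpose_mat (A * X) = A * X"
    and x4: "transpose_mat (X * A) = X * A"
    and y1: "A * Y * A = A" and y2: "Y * A * Y = Y" and y3: "transpose_mat (A * Y) = A * Y"
    and y4: "transpose_mat (Y * A) = Y * A"
  shows "X = Y"
proof -
  define At where "At = transpose_mat A"
  define Xt where "Xt = transpose_mat X"
  define Yt where "Yt = transpose_mat Y"
  have At: "At \<in> carrier_mat n n" and Xt: "Xt \<in> carrier_mat n n" and Yt: "Yt \<in> carrier_mat n n"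
    unfolding At_def Xt_def Yt_def using A X Y by auto
  note ac = assoc_mult_mat[of _ n n _ n _ n] mult_carrier_mat[of _ n n _ n]
  have e3: "Xt * At = A * X" using x3 transpose_mult[OF A X] unfolding At_def Xt_def by simp
  have e4: "At * Xt = X * A" using x4 transpose_mult[OF X A] unfolding At_def Xt_def by simp
  have f3: "Yt * At = A * Y" using y3 transpose_mult[OF A Y] unfolding At_def Yt_def by simp
  have f4: "At * Yt = Y * A" using y4 transpose_mult[OF Y A] unfolding At_def Yt_def by simp
  have AtY: "At * (Yt * At) = At"
  proof -
    have "transpose_mat (A * Y * A) = At * transpose_mat (A * Y)"
      unfolding At_def by (rule transpose_mult) (use A Y in auto)
    also have "transpose_mat (A * Y) = Yt * At" unfolding Yt_def At_def by (rule transpose_mult[OF A Y])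
    finally show ?thesis using y1 unfolding At_def by simp
  qed
  have AtX: "(At * Xt) * At = At"
  proof -
    have "transpose_mat (A * X * A) = At * transpose_mat (A * X)"
      unfolding At_def by (rule transpose_mult) (use A X in auto)
    also have "transpose_mat (A * X) = Xt * At" unfolding Xt_def At_def by (rule transpose_mult[OF A X])
    finally show ?thesis using x1 A X At Xt unfolding At_def by (simp add: ac)
  qed
  have "X = X * (A * X)" using x2 A X by (simp add: ac)
  also have "\<dots> = X * (Xt * At)" unfolding e3 ..
  also have "\<dots> = X * (Xt * (At * (Yt * At)))" unfolding AtY ..
  also have "\<dots> = X * ((Xt * At) * (Yt * At))" using X Xt At Yt by (simp add: ac)
  also have "\<dots> = X * ((A * X) * (A * Y))" unfolding e3 f3 ..
  also have "\<dots> = (X * A * X) * (A * Y)" using X A Y by (simp add: ac)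
  also have "\<dots> = X * (A * Y)" unfolding x2 ..
  finally have X1: "X = X * (A * Y)" .
  have "Y = (Y * A) * Y" using y2 by simp
  also have "\<dots> = (At * Yt) * Y" unfolding f4 ..
  also have "\<dots> = ((At * Xt) * At) * Yt * Y" unfolding AtX ..
  also have "\<dots> = (At * Xt) * ((At * Yt) * Y)" using Xt At Yt Y by (simp add: ac)
  also have "\<dots> = (X * A) * ((Y * A) * Y)" unfolding e4 f4 ..
  also have "\<dots> = X * (A * Y)" using X A Y y2 by (simp add: ac)
  finally show ?thesis using X1 by simp
qed

lemma pinv_spec:
  fixes Q :: "real mat"
  assumes Q: "Q \<in> carrier_mat n n" and QTQ: "transpose_mat Q * Q = 1\<^sub>m n"
    and QQT: "Q * transpose_mat Q = 1\<^sub>m n"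
  shows "pinv (Q * mat_diag n d * transpose_mat Q)
       = Q * mat_diag n (\<lambda>k. if d k = 0 then 0 else 1 / d k) * transpose_mat Q"
proof -
  define dp where "dp = (\<lambda>k. if d k = 0 then 0 else 1 / d k)"
  let ?B = "Q * mat_diag n d * transpose_mat Q"
  let ?X = "Q * mat_diag n dp * transpose_mat Q"
  note sm = spec_mult[OF Q QTQ QQT] and st = spec_transpose[OF Q QTQ QQT]
    and sc = spec_carrier[OF Q QTQ QQT]
  have B: "?B \<in> carrier_mat n n" and X: "?X \<in> carrier_mat n n" using sc by auto
  have f1: "(\<lambda>k. d k * dp k * d k) = d" and f2: "(\<lambda>k. dp k * d k * dp k) = dp"
    unfolding dp_def by auto
  have p1: "?B * ?X * ?B = ?B" unfolding sm f1 ..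
  have p2: "?X * ?B * ?X = ?X" unfolding sm f2 ..
  have p3: "transpose_mat (?B * ?X) = ?B * ?X" unfolding sm st ..
  have p4: "transpose_mat (?X * ?B) = ?X * ?B" unfolding sm st ..
  have "pinv ?B = ?X"
    unfolding pinv_def
  proof (rule the_equality)
    show "?X \<in> carrier_mat (dim_col ?B) (dim_row ?B) \<and> ?B * ?X * ?B = ?B \<and> ?X * ?B * ?X = ?X \<and>
        transpose_mat (?B * ?X) = ?B * ?X \<and> transpose_mat (?X * ?B) = ?X * ?B"
      using X B p1 p2 p3 p4 by auto
  next
    fix Y assume h: "Y \<in> carrier_mat (dim_col ?B) (dim_row ?B) \<and> ?B * Y * ?B = ?B \<and> Y * ?B * Y = Y \<and>
        transpose_mat (?B * Y) = ?B * Y \<and> transpose_mat (Y * ?B) = Y * ?B"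
    then have Y: "Y \<in> carrier_mat n n" using B by auto
    show "Y = ?X" using pinv_unique_sq[OF B Y X] h p1 p2 p3 p4 by auto
  qed
  then show ?thesis unfolding dp_def .
qed

lemma append_cols_carrier: assumes "A \<in> carrier_mat n a" "B \<in> carrier_mat n b"
  shows "append_cols A B \<in> carrier_mat n (a + b)"
  using assms unfolding append_cols_def by auto

lemma hcat_carrier: assumes "\<And>i. i < r \<Longrightarrow> S i \<in> carrier_mat n (q i)"
  shows "hcat n S r \<in> carrier_mat n (\<Sum>i<r. q i)"
  using assms
proof (induction r)
  case 0 then show ?case by simp
next
  case (Suc r)
  then show ?case by (simp add: append_cols_carrier)
qed

lemma norm_T: fixes M :: "real mat" assumes M: "M \<in> carrier_mat n c" and x: "x \<in> carrier_vec n"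
  shows "(transpose_mat M *\<^sub>v x) \<bullet> (transpose_mat M *\<^sub>v x) = (\<Sum>j\<in>{0..<c}. (col M j \<bullet> x)^2)"
  using M x by (auto simp: scalar_prod_def[of "transpose_mat M *\<^sub>v x"] power2_eq_square intro!: sum.cong)

lemma col_append_cols: assumes A: "A \<in> carrier_mat n a" and B: "B \<in> carrier_mat n b" and j: "j < a + b"
  shows "col (append_cols A B) j = (if j < a then col A j else col B (j - a))"
  using A B j unfolding append_cols_def by (auto intro!: eq_vecI)

lemma norm_T_append: fixes A B :: "real mat" assumes A: "A \<in> carrier_mat n a" and B: "B \<in> carrier_mat n b" and x: "x \<in> carrier_vec n"
  shows "(transpose_mat (append_cols A B) *\<^sub>v x) \<bullet> (transpose_mat (append_cols A B) *\<^sub>v x)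
    = (transpose_mat A *\<^sub>v x) \<bullet> (transpose_mat A *\<^sub>v x) + (transpose_mat B *\<^sub>v x) \<bullet> (transpose_mat B *\<^sub>v x)"
proof -
  let ?f = "\<lambda>j. (col (append_cols A B) j \<bullet> x)^2"
  have "(transpose_mat (append_cols A B) *\<^sub>v x) \<bullet> (transpose_mat (append_cols A B) *\<^sub>v x)
      = (\<Sum>j\<in>{0..<a+b}. ?f j)" by (rule norm_T[OF append_cols_carrier[OF A B] x])
  also have "\<dots> = (\<Sum>j\<in>{0..<a}. ?f j) + (\<Sum>j\<in>{a..<a+b}. ?f j)"
    by (rule sum.atLeastLessThan_concat[symmetric]) auto
  also have "(\<Sum>j\<in>{0..<a}. ?f j) = (\<Sum>j\<in>{0..<a}. (col A j \<bullet> x)^2)"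
    by (intro sum.cong) (auto simp: col_append_cols[OF A B])
  also have "(\<Sum>j\<in>{a..<a+b}. ?f j) = (\<Sum>j\<in>{0..<b}. ?f (j + a))"
    using sum.shift_bounds_nat_ivl[of ?f 0 a b] by (simp add: add.commute)
  also have "\<dots> = (\<Sum>j\<in>{0..<b}. (col B j \<bullet> x)^2)"
    by (intro sum.cong) (auto simp: col_append_cols[OF A B])
  finally show ?thesis using norm_T[OF A x] norm_T[OF B x] by simp
qed

lemma hcat_norm: fixes S :: "nat \<Rightarrow> real mat" assumes S: "\<And>i. i < r \<Longrightarrow> S i \<in> carrier_mat n (q i)" and x: "x \<in> carrier_vec n"
  shows "(transpose_mat (hcat n S r) *\<^sub>v x) \<bullet> (transpose_mat (hcat n S r) *\<^sub>v x)
     = (\<Sum>i<r. (transpose_mat (S i) *\<^sub>v x) \<bullet> (transpose_mat (S i) *\<^sub>v x))"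
  using S
proof (induction r)
  case 0 then show ?case by (simp add: scalar_prod_def)
next
  case (Suc r)
  have H: "hcat n S r \<in> carrier_mat n (\<Sum>i<r. q i)" using hcat_carrier[of r S n q] Suc.prems by auto
  have Sr: "S r \<in> carrier_mat n (q r)" using Suc.prems by auto
  show ?case using norm_T_append[OF H Sr x] Suc by simp
qed

lemma gram_carrier: assumes G: "G \<in> carrier_mat n n" and S: "S \<in> carrier_mat n q"
  shows "transpose_mat S * (G * G) * S \<in> carrier_mat q q"
  using G S by auto

lemma gram_sym: fixes G S :: "real mat"
  assumes G: "G \<in> carrier_mat n n" and Gs: "transpose_mat G = G" and S: "S \<in> carrier_mat n q"
  shows "transpose_mat (transpose_mat S * (G * G) * S) = transpose_mat S * (G * G) * S"
proof -
  define St where "St = transpose_mat S"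
  have St: "St \<in> carrier_mat q n" unfolding St_def using S by auto
  have GG: "G * G \<in> carrier_mat n n" using G by auto
  have GGT: "transpose_mat (G * G) = G * G" using transpose_mult[OF G G] Gs by simp
  have "transpose_mat (St * (G * G) * S) = transpose_mat S * transpose_mat (St * (G * G))"
    by (rule transpose_mult[of _ q n]) (use St GG S in auto)
  also have "transpose_mat (St * (G * G)) = transpose_mat (G * G) * transpose_mat St"
    by (rule transpose_mult[OF St GG])
  also have "transpose_mat S * (transpose_mat (G * G) * transpose_mat St) = St * ((G * G) * S)"
    unfolding GGT St_def by simp
  also have "\<dots> = St * (G * G) * S" by (rule assoc_mult_mat[OF St GG S, symmetric])
  finally show ?thesis unfolding St_def .
qed

lemma gram_quad: fixes G S :: "real mat"
  assumes G: "G \<in> carrier_mat n n" and Gs: "transpose_mat G = G" and S: "S \<in> carrier_mat n q"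
    and u: "u \<in> carrier_vec q"
  shows "u \<bullet> ((transpose_mat S * (G * G) * S) *\<^sub>v u) = (G *\<^sub>v (S *\<^sub>v u)) \<bullet> (G *\<^sub>v (S *\<^sub>v u))"
proof -
  define St where "St = transpose_mat S"
  have St: "St \<in> carrier_mat q n" unfolding St_def using S by auto
  have GG: "G * G \<in> carrier_mat n n" using G by auto
  have Su: "S *\<^sub>v u \<in> carrier_vec n" using S u by auto
  have GSu: "G *\<^sub>v (S *\<^sub>v u) \<in> carrier_vec n" using G Su by auto
  have GGSu: "G *\<^sub>v (G *\<^sub>v (S *\<^sub>v u)) \<in> carrier_vec n" using G GSu by auto
  have "(St * (G * G) * S) *\<^sub>v u = (St * (G * G)) *\<^sub>v (S *\<^sub>v u)"
    by (rule assoc_mult_mat_vec[of _ q n]) (use St GG S u in auto)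
  also have "\<dots> = St *\<^sub>v ((G * G) *\<^sub>v (S *\<^sub>v u))" by (rule assoc_mult_mat_vec[OF St GG Su])
  also have "(G * G) *\<^sub>v (S *\<^sub>v u) = G *\<^sub>v (G *\<^sub>v (S *\<^sub>v u))" by (rule assoc_mult_mat_vec[OF G G Su])
  finally have e: "(St * (G * G) * S) *\<^sub>v u = St *\<^sub>v (G *\<^sub>v (G *\<^sub>v (S *\<^sub>v u)))" .
  have "u \<bullet> (St *\<^sub>v (G *\<^sub>v (G *\<^sub>v (S *\<^sub>v u)))) = (St *\<^sub>v (G *\<^sub>v (G *\<^sub>v (S *\<^sub>v u)))) \<bullet> u"
    by (rule comm_scalar_prod[of _ q]) (use St GGSu u in auto)
  also have "\<dots> = (G *\<^sub>v (G *\<^sub>v (S *\<^sub>v u))) \<bullet> (S *\<^sub>v u)"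
    unfolding St_def by (rule transpose_vec_mult_scalar[OF S u GGSu])
  also have "\<dots> = (S *\<^sub>v u) \<bullet> (G *\<^sub>v (G *\<^sub>v (S *\<^sub>v u)))"
    by (rule comm_scalar_prod[OF GGSu Su])
  also have "\<dots> = (G *\<^sub>v (S *\<^sub>v u)) \<bullet> (G *\<^sub>v (S *\<^sub>v u))"
    by (rule sym_quad[OF G Gs Su GSu])
  finally have c: "u \<bullet> (St *\<^sub>v (G *\<^sub>v (G *\<^sub>v (S *\<^sub>v u)))) = (G *\<^sub>v (S *\<^sub>v u)) \<bullet> (G *\<^sub>v (S *\<^sub>v u))" .
  show ?thesis unfolding St_def[symmetric] e by (rule c)
qed

lemma wsum_carrier: "wsum_mat n n I w M \<in> carrier_mat n n"
  unfolding wsum_mat_def by auto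

lemma wsum_mult_vec: fixes M :: "'b \<Rightarrow> real mat"
  assumes I: "finite I" and M: "\<And>i. i \<in> I \<Longrightarrow> M i \<in> carrier_mat n n" and g: "g \<in> carrier_vec n"
  shows "wsum_mat n n I w M *\<^sub>v g = vec n (\<lambda>j. \<Sum>i\<in>I. w i * (M i *\<^sub>v g) $ j)"
proof (rule eq_vecI)
  fix j assume "j < dim_vec (vec n (\<lambda>j. \<Sum>i\<in>I. w i * (M i *\<^sub>v g) $ j))"
  then have j: "j < n" by simp
  have "(wsum_mat n n I w M *\<^sub>v g) $ j = (\<Sum>k\<in>{0..<n}. (\<Sum>i\<in>I. w i * M i $$ (j, k)) * g $ k)"
    using j g unfolding wsum_mat_def by (simp add: scalar_prod_def)
  also have "\<dots> = (\<Sum>i\<in>I. w i * (\<Sum>k\<in>{0..<n}. M i $$ (j, k) * g $ k))"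
    by (simp add: sum_distrib_left sum_distrib_right mult.assoc sum.swap[of _ "{0..<n}"])
  also have "\<dots> = (\<Sum>i\<in>I. w i * (M i *\<^sub>v g) $ j)"
  proof (intro sum.cong refl)
    fix i assume "i \<in> I"
    then have "M i \<in> carrier_mat n n" by (rule M)
    then show "w i * (\<Sum>k\<in>{0..<n}. M i $$ (j, k) * g $ k) = w i * (M i *\<^sub>v g) $ j"
      using j g by (simp add: scalar_prod_def)
  qed
  finally show "(wsum_mat n n I w M *\<^sub>v g) $ j = vec n (\<lambda>j. \<Sum>i\<in>I. w i * (M i *\<^sub>v g) $ j) $ j"
    using j by simp
qed (simp add: wsum_mat_def)

lemma wsum_quad: fixes M :: "'b \<Rightarrow> real mat"
  assumes I: "finite I" and M: "\<And>i. i \<in> I \<Longrightarrow> M i \<in> carrier_mat n n" and g: "g \<in> carrier_vec n"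
  shows "g \<bullet> (wsum_mat n n I w M *\<^sub>v g) = (\<Sum>i\<in>I. w i * (g \<bullet> (M i *\<^sub>v g)))"
proof -
  have "g \<bullet> (wsum_mat n n I w M *\<^sub>v g) = (\<Sum>j\<in>{0..<n}. g $ j * (\<Sum>i\<in>I. w i * (M i *\<^sub>v g) $ j))"
  proof -
    have e: "wsum_mat n n I w M *\<^sub>v g = vec n (\<lambda>j. \<Sum>i\<in>I. w i * (M i *\<^sub>v g) $ j)"
      by (rule wsum_mult_vec[OF I M g])
    show ?thesis unfolding e scalar_prod_def by simp
  qed
  also have "\<dots> = (\<Sum>i\<in>I. w i * (\<Sum>j\<in>{0..<n}. g $ j * (M i *\<^sub>v g) $ j))"
    by (simp add: sum_distrib_left sum.swap[of _ "{0..<n}"] algebra_simps)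
  also have "\<dots> = (\<Sum>i\<in>I. w i * (g \<bullet> (M i *\<^sub>v g)))"
  proof (intro sum.cong refl)
    fix i assume "i \<in> I"
    then have "M i \<in> carrier_mat n n" by (rule M)
    then show "w i * (\<Sum>j\<in>{0..<n}. g $ j * (M i *\<^sub>v g) $ j) = w i * (g \<bullet> (M i *\<^sub>v g))"
      by (simp add: scalar_prod_def)
  qed
  finally show ?thesis .
qed

lemma wsum_sym: fixes M :: "'b \<Rightarrow> real mat"
  assumes M: "\<And>i. i \<in> I \<Longrightarrow> M i \<in> carrier_mat n n"
    and Ms: "\<And>i. i \<in> I \<Longrightarrow> transpose_mat (M i) = M i"
  shows "transpose_mat (wsum_mat n n I w M) = wsum_mat n n I w M"
proof (rule eq_matI)
  fix j k assume "j < dim_row (wsum_mat n n I w M)" "k < dim_col (wsum_mat n n I w M)"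
  then have j: "j < n" and k: "k < n" unfolding wsum_mat_def by auto
  have e: "M i $$ (k, j) = M i $$ (j, k)" if "i \<in> I" for i
  proof -
    have "M i $$ (k, j) = transpose_mat (M i) $$ (j, k)" using M[OF that] j k by simp
    then show ?thesis using Ms[OF that] by simp
  qed
  show "transpose_mat (wsum_mat n n I w M) $$ (j, k) = wsum_mat n n I w M $$ (j, k)"
    using j k e unfolding wsum_mat_def by (auto intro!: sum.cong)
qed (auto simp: wsum_mat_def)

lemma eig_finite: fixes A :: "real mat" assumes A: "A \<in> carrier_mat n n"
  shows "finite {k. eigenvalue A k \<and> k \<noteq> 0}"
proof -
  have "char_poly A \<noteq> 0" using degree_monic_char_poly[OF A] by auto
  then have "finite {k. poly (char_poly A) k = 0}" by (rule poly_roots_finite)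
  then show ?thesis by (rule finite_subset[rotated]) (use eigenvalue_root_char_poly[OF A] in auto)
qed

lemma spec_eigenvalue:
  fixes Q :: "real mat"
  assumes Q: "Q \<in> carrier_mat n n" and QTQ: "transpose_mat Q * Q = 1\<^sub>m n"
    and QQT: "Q * transpose_mat Q = 1\<^sub>m n" and k: "k < n"
  shows "eigenvalue (Q * mat_diag n d * transpose_mat Q) (d k)"
proof -
  have c: "col Q k \<in> carrier_vec n" using Q by auto
  have "col Q k \<bullet> col Q k = 1" using colQ_sprod[OF Q QTQ QQT k k] by simp
  then have nz: "col Q k \<noteq> 0\<^sub>v n" by auto
  show ?thesis unfolding eigenvalue_def eigenvector_def
    using c nz spec_eig[OF Q QTQ QQT k] Q by (intro exI[of _ "col Q k"]) auto
qed

lemma eig_transfer: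
  fixes C :: "real mat"
  assumes C: "C \<in> carrier_mat n N" and ev: "eigenvalue (C * transpose_mat C) l" and l: "l \<noteq> 0"
  shows "eigenvalue (transpose_mat C * C) l"
proof -
  have Ct: "transpose_mat C \<in> carrier_mat N n" using C by auto
  obtain w where w: "w \<in> carrier_vec n" and w0: "w \<noteq> 0\<^sub>v n"
    and eq: "(C * transpose_mat C) *\<^sub>v w = l \<cdot>\<^sub>v w"
    using ev C unfolding eigenvalue_def eigenvector_def by auto
  define y where "y = transpose_mat C *\<^sub>v w"
  have y: "y \<in> carrier_vec N" unfolding y_def using Ct w by auto
  have Cy: "C *\<^sub>v y = l \<cdot>\<^sub>v w" using eq assoc_mult_mat_vec[OF C Ct w] unfolding y_def by simp
  have y0: "y \<noteq> 0\<^sub>v N"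
  proof
    assume "y = 0\<^sub>v N"
    then have "C *\<^sub>v y = 0\<^sub>v n" using C by auto
    then have h: "l \<cdot>\<^sub>v w = 0\<^sub>v n" using Cy by simp
    have "w $ i = 0" if i: "i < n" for i
    proof -
      have "(l \<cdot>\<^sub>v w) $ i = 0" using h i by simp
      then have "l * w $ i = 0" using i w by simp
      then show ?thesis using l by simp
    qed
    then have "w = 0\<^sub>v n" using w by (intro eq_vecI) auto
    then show False using w0 by simp
  qed
  have "(transpose_mat C * C) *\<^sub>v y = transpose_mat C *\<^sub>v (C *\<^sub>v y)" by (rule assoc_mult_mat_vec[OF Ct C y])
  also have "\<dots> = l \<cdot>\<^sub>v y" unfolding Cy unfolding y_def using mult_mat_vec[OF Ct w] by simp
  finally show ?thesis unfolding eigenvalue_def eigenvector_def using y y0 Ct C by (intro exI[of _ y]) auto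
qed

lemma mult_zero_vec_right: assumes A: "(A :: 'a :: semiring_0 mat) \<in> carrier_mat nr nc"
  shows "A *\<^sub>v 0\<^sub>v nc = 0\<^sub>v nr"
  using A by (intro eq_vecI) auto

theorem theorem5:
  fixes n r :: nat and G :: "real mat"
    and S :: "nat \<Rightarrow> real mat" and q :: "nat \<Rightarrow> nat" and p :: "nat \<Rightarrow> real"
  assumes G: "sym_psd n G"
    and S: "\<And>i. i < r \<Longrightarrow> S i \<in> carrier_mat n (q i)"
    and p_pos: "\<And>i. i < r \<Longrightarrow> p i > 0"
    and p_sum: "(\<Sum>i<r. p i) = 1"
    and p_def: "\<And>i. i < r \<Longrightarrow>
       p i = mat_trace (transpose_mat (S i) * (G * G) * S i) /
             mat_trace (transpose_mat (hcat n S r) * (G * G) * hcat n S r)"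
  shows "lambda_min_plus
           (G * wsum_mat n n {..<r} p
                 (\<lambda>i. S i * pinv (transpose_mat (S i) * (G * G) * S i) * transpose_mat (S i)) * G)
         \<ge> lambda_min_plus (transpose_mat (hcat n S r) * (G * G) * hcat n S r) /
           mat_trace (transpose_mat (hcat n S r) * (G * G) * hcat n S r)"
proof -
  have Gc: "G \<in> carrier_mat n n" and Gs: "transpose_mat G = G" using G unfolding sym_psd_def by auto
  have r0: "0 < r"
  proof (rule ccontr)
    assume "\<not> 0 < r" then have "r = 0" by simp
    then show False using p_sum by simp
  qed
  define Sb where "Sb = hcat n S r"
  define N where "N = (\<Sum>i<r. q i)"
  have Sb: "Sb \<in> carrier_mat n N" unfolding Sb_def N_def by (rule hcat_carrier) (rule S)
  define M where "M = transpose_mat Sb * (G * G) * Sb"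
  define T where "T = mat_trace M"
  define B where "B = (\<lambda>i. transpose_mat (S i) * (G * G) * S i)"
  define t where "t = (\<lambda>i. mat_trace (B i))"
  define X where "X = (\<lambda>i. pinv (B i))"
  define Mi where "Mi = (\<lambda>i. S i * X i * transpose_mat (S i))"
  define W where "W = wsum_mat n n {..<r} p Mi"
  define L where "L = G * W * G"
  have Mc: "M \<in> carrier_mat N N" unfolding M_def using Gc Sb by auto
  have pt: "\<And>i. i < r \<Longrightarrow> p i = t i / T" unfolding t_def B_def T_def M_def Sb_def by (rule p_def)
  have Bc: "\<And>i. i < r \<Longrightarrow> B i \<in> carrier_mat (q i) (q i)" unfolding B_def using gram_carrier[OF Gc S] .
  have Bs: "\<And>i. i < r \<Longrightarrow> transpose_mat (B i) = B i" unfolding B_def using gram_sym[OF Gc Gs S] .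
  have Bq: "\<And>i u. i < r \<Longrightarrow> u \<in> carrier_vec (q i) \<Longrightarrow>
      u \<bullet> (B i *\<^sub>v u) = (G *\<^sub>v (S i *\<^sub>v u)) \<bullet> (G *\<^sub>v (S i *\<^sub>v u))"
    unfolding B_def using gram_quad[OF Gc Gs S] .
  have ex: "\<forall>i\<in>{..<r}. \<exists>Q d. Q \<in> carrier_mat (q i) (q i) \<and> transpose_mat Q * Q = 1\<^sub>m (q i)
      \<and> Q * transpose_mat Q = 1\<^sub>m (q i) \<and> B i = Q * mat_diag (q i) d * transpose_mat Q"
    using spectral[OF Bc Bs] by blast
  obtain Qf where Qf: "\<forall>i\<in>{..<r}. \<exists>d. Qf i \<in> carrier_mat (q i) (q i) \<and> transpose_mat (Qf i) * Qf i = 1\<^sub>m (q i)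
      \<and> Qf i * transpose_mat (Qf i) = 1\<^sub>m (q i) \<and> B i = Qf i * mat_diag (q i) d * transpose_mat (Qf i)"
    using bchoice[OF ex] by blast
  obtain df where df: "\<forall>i\<in>{..<r}. Qf i \<in> carrier_mat (q i) (q i) \<and> transpose_mat (Qf i) * Qf i = 1\<^sub>m (q i)
      \<and> Qf i * transpose_mat (Qf i) = 1\<^sub>m (q i) \<and> B i = Qf i * mat_diag (q i) (df i) * transpose_mat (Qf i)"
    using bchoice[OF Qf] by blast
  have Qc: "\<And>i. i < r \<Longrightarrow> Qf i \<in> carrier_mat (q i) (q i)"
    and QTQ: "\<And>i. i < r \<Longrightarrow> transpose_mat (Qf i) * Qf i = 1\<^sub>m (q i)"
    and QQT: "\<And>i. i < r \<Longrightarrow> Qf i * transpose_mat (Qf i) = 1\<^sub>m (q i)"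
    and Bd: "\<And>i. i < r \<Longrightarrow> B i = Qf i * mat_diag (q i) (df i) * transpose_mat (Qf i)"
    using df by auto
  have dnn: "df i k \<ge> 0" if i: "i < r" and k: "k < q i" for i k
  proof (rule spec_psd_nonneg[OF Qc[OF i] QTQ[OF i] QQT[OF i] _ k])
    fix v :: "real vec" assume v: "v \<in> carrier_vec (q i)"
    have "0 \<le> v \<bullet> (B i *\<^sub>v v)" using Bq[OF i v] sprod_self_ge0 by simp
    then show "0 \<le> v \<bullet> ((Qf i * mat_diag (q i) (df i) * transpose_mat (Qf i)) *\<^sub>v v)" using Bd[OF i] by simp
  qed
  have tsum: "t i = (\<Sum>k\<in>{0..<q i}. df i k)" if i: "i < r" for i
    unfolding t_def Bd[OF i] by (rule spec_trace[OF Qc[OF i] QTQ[OF i] QQT[OF i]])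
  have tnn: "t i \<ge> 0" if i: "i < r" for i unfolding tsum[OF i] using dnn[OF i] by (intro sum_nonneg) auto
  define dp where "dp = (\<lambda>i k. if df i k = 0 then 0 else 1 / df i k)"
  have Xd: "X i = Qf i * mat_diag (q i) (dp i) * transpose_mat (Qf i)" if i: "i < r" for i
    unfolding X_def dp_def Bd[OF i] by (rule pinv_spec[OF Qc[OF i] QTQ[OF i] QQT[OF i]])
  have Xc: "X i \<in> carrier_mat (q i) (q i)" if i: "i < r" for i
    unfolding Xd[OF i] by (rule spec_carrier[OF Qc[OF i] QTQ[OF i] QQT[OF i]])
  have Xs: "transpose_mat (X i) = X i" if i: "i < r" for i
    unfolding Xd[OF i] by (rule spec_transpose[OF Qc[OF i] QTQ[OF i] QQT[OF i]])
  have dpnn: "dp i k \<ge> 0" if i: "i < r" and k: "k < q i" for i k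
    unfolding dp_def using dnn[OF i k] by auto
  have T0: "T \<noteq> 0"
  proof
    assume "T = 0" then have "p 0 = 0" using pt[OF r0] by simp
    then show False using p_pos[OF r0] by simp
  qed
  have "(\<Sum>i<r. p i) = (\<Sum>i<r. t i / T)" by (rule sum.cong) (auto simp: pt)
  then have "(\<Sum>i<r. t i) / T = 1" using p_sum by (simp add: sum_divide_distrib)
  then have tT: "(\<Sum>i<r. t i) = T" using T0 by (simp add: field_simps)
  have Tpos: "T > 0" using tT tnn T0 sum_nonneg[of "{..<r}" t] by force
  have tpT: "t i = T * p i" if i: "i < r" for i using pt[OF i] T0 by simp
  define z where "z = (\<lambda>v i. transpose_mat (S i) *\<^sub>v (G *\<^sub>v v))"
  have zc: "z v i \<in> carrier_vec (q i)" if i: "i < r" and v: "v \<in> carrier_vec n" for v i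
    unfolding z_def using S[OF i] Gc v by auto
  have zcol: "u \<bullet> z v i = (G *\<^sub>v (S i *\<^sub>v u)) \<bullet> v"
    if i: "i < r" and u: "u \<in> carrier_vec (q i)" and v: "v \<in> carrier_vec n" for i u v
  proof -
    have Gv: "G *\<^sub>v v \<in> carrier_vec n" using Gc v by auto
    have Su: "S i *\<^sub>v u \<in> carrier_vec n" using S[OF i] u by auto
    have "u \<bullet> z v i = z v i \<bullet> u" by (rule comm_scalar_prod[OF u zc[OF i v]])
    also have "\<dots> = (G *\<^sub>v v) \<bullet> (S i *\<^sub>v u)" unfolding z_def by (rule transpose_vec_mult_scalar[OF S[OF i] u Gv])
    also have "\<dots> = (S i *\<^sub>v u) \<bullet> (G *\<^sub>v v)" by (rule comm_scalar_prod[OF Gv Su])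
    also have "\<dots> = (G *\<^sub>v (S i *\<^sub>v u)) \<bullet> v" by (rule sym_quad[OF Gc Gs Su v])
    finally show ?thesis .
  qed
  have Mic: "Mi i \<in> carrier_mat n n" if i: "i < r" for i
    unfolding Mi_def using S[OF i] Xc[OF i] by auto
  have Mis: "transpose_mat (Mi i) = Mi i" if i: "i < r" for i
  proof -
    have Si: "S i \<in> carrier_mat n (q i)" by (rule S[OF i])
    have SX: "S i * X i \<in> carrier_mat n (q i)" using Si Xc[OF i] by auto
    have Sit: "transpose_mat (S i) \<in> carrier_mat (q i) n" using Si by auto
    have "transpose_mat (Mi i) = transpose_mat (transpose_mat (S i)) * transpose_mat (S i * X i)"
      unfolding Mi_def by (rule transpose_mult[OF SX Sit])
    also have "transpose_mat (S i * X i) = transpose_mat (X i) * transpose_mat (S i)"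
      by (rule transpose_mult[OF Si Xc[OF i]])
    also have "transpose_mat (transpose_mat (S i)) * (transpose_mat (X i) * transpose_mat (S i))
        = S i * (X i * transpose_mat (S i))" using Xs[OF i] by simp
    also have "\<dots> = Mi i" unfolding Mi_def by (rule assoc_mult_mat[OF Si Xc[OF i] Sit, symmetric])
    finally show ?thesis .
  qed
  have Mimv: "Mi i *\<^sub>v g = S i *\<^sub>v (X i *\<^sub>v (transpose_mat (S i) *\<^sub>v g))"
    if i: "i < r" and g: "g \<in> carrier_vec n" for i g
  proof -
    have Si: "S i \<in> carrier_mat n (q i)" by (rule S[OF i])
    have SX: "S i * X i \<in> carrier_mat n (q i)" using Si Xc[OF i] by auto
    have Sit: "transpose_mat (S i) \<in> carrier_mat (q i) n" using Si by auto
    have Stg: "transpose_mat (S i) *\<^sub>v g \<in> carrier_vec (q i)" using Sit g by auto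
    have "Mi i *\<^sub>v g = (S i * X i) *\<^sub>v (transpose_mat (S i) *\<^sub>v g)"
      unfolding Mi_def by (rule assoc_mult_mat_vec[OF SX Sit g])
    also have "\<dots> = S i *\<^sub>v (X i *\<^sub>v (transpose_mat (S i) *\<^sub>v g))"
      by (rule assoc_mult_mat_vec[OF Si Xc[OF i] Stg])
    finally show ?thesis .
  qed
  have Miq: "g \<bullet> (Mi i *\<^sub>v g) = (transpose_mat (S i) *\<^sub>v g) \<bullet> (X i *\<^sub>v (transpose_mat (S i) *\<^sub>v g))"
    if i: "i < r" and g: "g \<in> carrier_vec n" for i g
  proof -
    have Stg: "transpose_mat (S i) *\<^sub>v g \<in> carrier_vec (q i)" using S[OF i] g by auto
    have y: "X i *\<^sub>v (transpose_mat (S i) *\<^sub>v g) \<in> carrier_vec (q i)" using Xc[OF i] Stg by auto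
    show ?thesis unfolding Mimv[OF i g]
      by (rule transpose_vec_mult_scalar[OF S[OF i] y g, symmetric])
  qed
  have Wc: "W \<in> carrier_mat n n" unfolding W_def by (rule wsum_carrier)
  have Ws: "transpose_mat W = W" unfolding W_def by (rule wsum_sym) (auto intro: Mic Mis)
  have Lc: "L \<in> carrier_mat n n" unfolding L_def using Gc Wc by auto
  have Ls: "transpose_mat L = L"
  proof -
    have GW: "G * W \<in> carrier_mat n n" using Gc Wc by auto
    have "transpose_mat L = transpose_mat G * transpose_mat (G * W)"
      unfolding L_def by (rule transpose_mult[OF GW Gc])
    also have "transpose_mat (G * W) = transpose_mat W * transpose_mat G" by (rule transpose_mult[OF Gc Wc])
    also have "transpose_mat G * (transpose_mat W * transpose_mat G) = G * (W * G)" unfolding Ws Gs ..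
    also have "\<dots> = L" unfolding L_def by (rule assoc_mult_mat[OF Gc Wc Gc, symmetric])
    finally show ?thesis .
  qed
  have Lmv: "L *\<^sub>v v = G *\<^sub>v (W *\<^sub>v (G *\<^sub>v v))" if v: "v \<in> carrier_vec n" for v
  proof -
    have GW: "G * W \<in> carrier_mat n n" using Gc Wc by auto
    have Gv: "G *\<^sub>v v \<in> carrier_vec n" using Gc v by auto
    show ?thesis unfolding L_def using assoc_mult_mat_vec[OF GW Gc v] assoc_mult_mat_vec[OF Gc Wc Gv] by simp
  qed
  have Lq: "v \<bullet> (L *\<^sub>v v) = (\<Sum>i<r. p i * (z v i \<bullet> (X i *\<^sub>v z v i)))" if v: "v \<in> carrier_vec n" for v
  proof -
    have Gv: "G *\<^sub>v v \<in> carrier_vec n" using Gc v by auto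
    have WGv: "W *\<^sub>v (G *\<^sub>v v) \<in> carrier_vec n" using Wc Gv by auto
    have "v \<bullet> (L *\<^sub>v v) = (G *\<^sub>v v) \<bullet> (W *\<^sub>v (G *\<^sub>v v))"
      unfolding Lmv[OF v] by (rule sym_quad[OF Gc Gs v WGv])
    also have "\<dots> = (\<Sum>i\<in>{..<r}. p i * ((G *\<^sub>v v) \<bullet> (Mi i *\<^sub>v (G *\<^sub>v v))))"
      unfolding W_def by (rule wsum_quad[OF _ _ Gv]) (auto intro: Mic)
    also have "\<dots> = (\<Sum>i<r. p i * (z v i \<bullet> (X i *\<^sub>v z v i)))"
      by (rule sum.cong) (auto simp: Miq[OF _ Gv] z_def)
    finally show ?thesis .
  qed
  have L0: "L *\<^sub>v v = 0\<^sub>v n" if v: "v \<in> carrier_vec n" and zz: "\<And>i. i < r \<Longrightarrow> z v i = 0\<^sub>v (q i)" for v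
  proof -
    have Gv: "G *\<^sub>v v \<in> carrier_vec n" using Gc v by auto
    have "W *\<^sub>v (G *\<^sub>v v) = vec n (\<lambda>j. \<Sum>i\<in>{..<r}. p i * (Mi i *\<^sub>v (G *\<^sub>v v)) $ j)"
      unfolding W_def by (rule wsum_mult_vec[OF _ _ Gv]) (auto intro: Mic)
    also have "\<dots> = 0\<^sub>v n"
    proof (rule eq_vecI)
      fix j assume "j < dim_vec (0\<^sub>v n :: real vec)" then have j: "j < n" by simp
      have "(Mi i *\<^sub>v (G *\<^sub>v v)) $ j = 0" if i: "i \<in> {..<r}" for i
      proof -
        have i': "i < r" using i by simp
        have "Mi i *\<^sub>v (G *\<^sub>v v) = S i *\<^sub>v (X i *\<^sub>v z v i)" unfolding Mimv[OF i' Gv] z_def ..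
        also have "\<dots> = 0\<^sub>v n" unfolding zz[OF i'] mult_zero_vec_right[OF Xc[OF i']]
          by (rule mult_zero_vec_right[OF S[OF i']])
        finally show ?thesis using j by simp
      qed
      then show "vec n (\<lambda>j. \<Sum>i\<in>{..<r}. p i * (Mi i *\<^sub>v (G *\<^sub>v v)) $ j) $ j = 0\<^sub>v n $ j" using j by simp
    qed simp
    finally show ?thesis unfolding Lmv[OF v] using mult_zero_vec_right[OF Gc] by simp
  qed
  have kerB: "col (Qf i) k \<bullet> z v i = 0"
    if i: "i < r" and k: "k < q i" and d0: "df i k = 0" and v: "v \<in> carrier_vec n" for i k v
  proof -
    define u where "u = col (Qf i) k"
    have u: "u \<in> carrier_vec (q i)" unfolding u_def by (rule colQ_carrier[OF Qc[OF i] QTQ[OF i] QQT[OF i]])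
    have "B i *\<^sub>v u = 0\<^sub>v (q i)" unfolding u_def Bd[OF i] spec_eig[OF Qc[OF i] QTQ[OF i] QQT[OF i] k] d0
      using Qc[OF i] by auto
    then have "u \<bullet> (B i *\<^sub>v u) = 0" using u by simp
    then have "(G *\<^sub>v (S i *\<^sub>v u)) \<bullet> (G *\<^sub>v (S i *\<^sub>v u)) = 0" using Bq[OF i u] by simp
    then have "G *\<^sub>v (S i *\<^sub>v u) = 0\<^sub>v n" using sprod_self_eq0[of "G *\<^sub>v (S i *\<^sub>v u)" n] Gc S[OF i] u by auto
    then show ?thesis using zcol[OF i u v] v unfolding u_def by simp
  qed
  have blk: "z v i \<bullet> z v i \<le> t i * (z v i \<bullet> (X i *\<^sub>v z v i))"
    if v: "v \<in> carrier_vec n" and i: "i < r" for v i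
    unfolding tsum[OF i] Xd[OF i] dp_def
    by (rule spec_block[OF Qc[OF i] QTQ[OF i] QQT[OF i], where d="df i", OF dnn[OF i] zc[OF i v] kerB[OF i _ _ v]])
  have zXz: "z v i \<bullet> (X i *\<^sub>v z v i) \<ge> 0" if v: "v \<in> carrier_vec n" and i: "i < r" for v i
    unfolding Xd[OF i]
    by (rule spec_quad_nonneg[OF Qc[OF i] QTQ[OF i] QQT[OF i], where d="dp i", OF dpnn[OF i] zc[OF i v]])
  define C where "C = G * Sb"
  define K where "K = C * transpose_mat C"
  have Cc: "C \<in> carrier_mat n N" unfolding C_def using Gc Sb by auto
  have Ctc: "transpose_mat C \<in> carrier_mat N n" using Cc by auto
  have Sbt: "transpose_mat Sb \<in> carrier_mat N n" using Sb by auto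
  have CT: "transpose_mat C = transpose_mat Sb * G"
    unfolding C_def using transpose_mult[OF Gc Sb] Gs by simp
  have Kc: "K \<in> carrier_mat n n" unfolding K_def using Cc by auto
  have Ks: "transpose_mat K = K" unfolding K_def using transpose_mult[OF Cc Ctc] by simp
  have MC: "M = transpose_mat C * C"
  proof -
    have GSb: "G * Sb \<in> carrier_mat n N" using Gc Sb by auto
    have "transpose_mat C * C = transpose_mat Sb * (G * (G * Sb))"
      unfolding CT unfolding C_def by (rule assoc_mult_mat[OF Sbt Gc GSb])
    also have "G * (G * Sb) = (G * G) * Sb" by (rule assoc_mult_mat[OF Gc Gc Sb, symmetric])
    also have "transpose_mat Sb * ((G * G) * Sb) = M"
      unfolding M_def by (rule assoc_mult_mat[symmetric]) (use Sbt Gc Sb in auto)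
    finally show ?thesis ..
  qed
  have Kq: "v \<bullet> (K *\<^sub>v v) = (\<Sum>i<r. z v i \<bullet> z v i)" if v: "v \<in> carrier_vec n" for v
  proof -
    have Ctv: "transpose_mat C *\<^sub>v v \<in> carrier_vec N" using Ctc v by auto
    have "K *\<^sub>v v = C *\<^sub>v (transpose_mat C *\<^sub>v v)" unfolding K_def by (rule assoc_mult_mat_vec[OF Cc Ctc v])
    then have "v \<bullet> (K *\<^sub>v v) = (transpose_mat C *\<^sub>v v) \<bullet> (transpose_mat C *\<^sub>v v)"
      using transpose_vec_mult_scalar[OF Cc Ctv v] by simp
    also have "transpose_mat C *\<^sub>v v = transpose_mat Sb *\<^sub>v (G *\<^sub>v v)"
      unfolding CT by (rule assoc_mult_mat_vec[OF Sbt Gc v])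
    also have "(transpose_mat Sb *\<^sub>v (G *\<^sub>v v)) \<bullet> (transpose_mat Sb *\<^sub>v (G *\<^sub>v v)) = (\<Sum>i<r. z v i \<bullet> z v i)"
      unfolding Sb_def z_def by (rule hcat_norm[OF S]) (use Gc v in auto)
    finally show ?thesis .
  qed
  have KL: "v \<bullet> (K *\<^sub>v v) \<le> T * (v \<bullet> (L *\<^sub>v v))" if v: "v \<in> carrier_vec n" for v
  proof -
    have "v \<bullet> (K *\<^sub>v v) \<le> (\<Sum>i<r. t i * (z v i \<bullet> (X i *\<^sub>v z v i)))"
      unfolding Kq[OF v] by (rule sum_mono) (auto intro: blk[OF v])
    also have "\<dots> = (\<Sum>i<r. T * (p i * (z v i \<bullet> (X i *\<^sub>v z v i))))"
      by (rule sum.cong) (auto simp: tpT)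
    also have "\<dots> = T * (v \<bullet> (L *\<^sub>v v))" unfolding Lq[OF v] sum_distrib_left ..
    finally show ?thesis .
  qed
  obtain QK dK where QK: "QK \<in> carrier_mat n n" and QKTQK: "transpose_mat QK * QK = 1\<^sub>m n"
    and QKQKT: "QK * transpose_mat QK = 1\<^sub>m n" and Kd: "K = QK * mat_diag n dK * transpose_mat QK"
    using spectral[OF Kc Ks] by blast
  have dKnn: "dK k \<ge> 0" if k: "k < n" for k
  proof (rule spec_psd_nonneg[OF QK QKTQK QKQKT _ k])
    fix v :: "real vec" assume v: "v \<in> carrier_vec n"
    show "0 \<le> v \<bullet> ((QK * mat_diag n dK * transpose_mat QK) *\<^sub>v v)"
      unfolding Kd[symmetric] Kq[OF v] by (intro sum_nonneg) (auto intro: sprod_self_ge0)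
  qed
  obtain QL dL where QL: "QL \<in> carrier_mat n n" and QLTQL: "transpose_mat QL * QL = 1\<^sub>m n"
    and QLQLT: "QL * transpose_mat QL = 1\<^sub>m n" and Ld: "L = QL * mat_diag n dL * transpose_mat QL"
    using spectral[OF Lc Ls] by blast
  define EL where "EL = {k. eigenvalue L k \<and> k \<noteq> 0}"
  define EM where "EM = {k. eigenvalue M k \<and> k \<noteq> 0}"
  have fEL: "finite EL" unfolding EL_def by (rule eig_finite[OF Lc])
  have fEM: "finite EM" unfolding EM_def by (rule eig_finite[OF Mc])
  have main: "Min EM / T \<le> \<mu>" if mu: "\<mu> \<in> EL" for \<mu>
  proof -
    have mu0: "\<mu> \<noteq> 0" using mu unfolding EL_def by simp
    obtain v where v: "v \<in> carrier_vec n" and v0: "v \<noteq> 0\<^sub>v n" and Lv: "L *\<^sub>v v = \<mu> \<cdot>\<^sub>v v"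
      using mu Lc unfolding EL_def eigenvalue_def eigenvector_def by auto
    have ker: "col QK k \<bullet> v = 0" if k: "k < n" and d0: "dK k = 0" for k
    proof -
      define x where "x = col QK k"
      have x: "x \<in> carrier_vec n" unfolding x_def by (rule colQ_carrier[OF QK QKTQK QKQKT])
      have "K *\<^sub>v x = 0\<^sub>v n" unfolding x_def Kd spec_eig[OF QK QKTQK QKQKT k] d0 using QK by auto
      then have "x \<bullet> (K *\<^sub>v x) = 0" using x by simp
      then have s0: "(\<Sum>i<r. z x i \<bullet> z x i) = 0" using Kq[OF x] by simp
      have "z x i \<bullet> z x i = 0" if i: "i < r" for i
        using s0 sum_nonneg_eq_0_iff[of "{..<r}" "\<lambda>i. z x i \<bullet> z x i"] sprod_self_ge0 i by auto
      then have "z x i = 0\<^sub>v (q i)" if i: "i < r" for i using sprod_self_eq0[OF zc[OF i x]] i by auto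
      then have Lx: "L *\<^sub>v x = 0\<^sub>v n" by (rule L0[OF x])
      have "\<mu> * (x \<bullet> v) = x \<bullet> (L *\<^sub>v v)" unfolding Lv using x v by simp
      also have "\<dots> = (L *\<^sub>v x) \<bullet> v" by (rule sym_quad[OF Lc Ls x v])
      also have "\<dots> = 0" unfolding Lx using v by simp
      finally have "x \<bullet> v = 0" using mu0 by simp
      then show ?thesis unfolding x_def .
    qed
    have exk: "\<exists>k<n. dK k > 0 \<and> dK k * (v \<bullet> v) \<le> v \<bullet> ((QK * mat_diag n dK * transpose_mat QK) *\<^sub>v v)"
      by (rule spec_rayleigh[OF QK QKTQK QKQKT dKnn v v0 ker])
    then obtain k where k: "k < n" and dk: "dK k > 0"
      and ray: "dK k * (v \<bullet> v) \<le> v \<bullet> ((QK * mat_diag n dK * transpose_mat QK) *\<^sub>v v)"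
      by blast
    have vv: "v \<bullet> v > 0" using sprod_self_ge0[of v] sprod_self_eq0[OF v] v0 by auto
    have vLv: "v \<bullet> (L *\<^sub>v v) = \<mu> * (v \<bullet> v)" unfolding Lv using v by simp
    have ray': "dK k * (v \<bullet> v) \<le> v \<bullet> (K *\<^sub>v v)" using ray by (simp only: Kd)
    also have "\<dots> \<le> T * (v \<bullet> (L *\<^sub>v v))" by (rule KL[OF v])
    also have "\<dots> = (T * \<mu>) * (v \<bullet> v)" unfolding vLv by simp
    finally have "dK k * (v \<bullet> v) \<le> (T * \<mu>) * (v \<bullet> v)" .
    then have dkT: "dK k \<le> T * \<mu>" using vv by simp
    have "eigenvalue K (dK k)" unfolding Kd by (rule spec_eigenvalue[OF QK QKTQK QKQKT k])
    then have "eigenvalue M (dK k)" unfolding MC K_def using eig_transfer[OF Cc] dk by simp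
    then have "dK k \<in> EM" unfolding EM_def using dk by simp
    then have "Min EM \<le> dK k" using fEM by simp
    then have "Min EM \<le> T * \<mu>" using dkT by simp
    then show ?thesis using Tpos by (simp add: field_simps)
  qed
  have neEL: "EL \<noteq> {}"
  proof -
    have t0: "t 0 > 0" using tpT[OF r0] Tpos p_pos[OF r0] by simp
    obtain k where k: "k < q 0" and dk0: "df 0 k \<noteq> 0"
    proof (rule ccontr)
      assume "\<not> thesis"
      then have "\<forall>k<q 0. df 0 k = 0" using that by blast
      then have "t 0 = 0" unfolding tsum[OF r0] by simp
      then show False using t0 by simp
    qed
    have dk: "df 0 k > 0" using dnn[OF r0 k] dk0 by simp
    define u where "u = col (Qf 0) k"
    have u: "u \<in> carrier_vec (q 0)" unfolding u_def by (rule colQ_carrier[OF Qc[OF r0] QTQ[OF r0] QQT[OF r0]])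
    have "u \<bullet> (B 0 *\<^sub>v u) = df 0 k"
      unfolding u_def Bd[OF r0] spec_eig[OF Qc[OF r0] QTQ[OF r0] QQT[OF r0] k]
      using colQ_sprod[OF Qc[OF r0] QTQ[OF r0] QQT[OF r0] k k] Qc[OF r0] by simp
    define w where "w = G *\<^sub>v (S 0 *\<^sub>v u)"
    have w: "w \<in> carrier_vec n" unfolding w_def using Gc S[OF r0] u by auto
    have ww: "w \<bullet> w > 0" unfolding w_def using Bq[OF r0 u] \<open>u \<bullet> (B 0 *\<^sub>v u) = df 0 k\<close> dk by simp
    have "u \<bullet> z w 0 = w \<bullet> w" using zcol[OF r0 u w] unfolding w_def by simp
    then have "z w 0 \<noteq> 0\<^sub>v (q 0)" using ww u by auto
    then have zz: "z w 0 \<bullet> z w 0 > 0" using sprod_self_ge0[of "z w 0"] sprod_self_eq0[OF zc[OF r0 w]] by auto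
    then have "0 < t 0 * (z w 0 \<bullet> (X 0 *\<^sub>v z w 0))" using blk[OF w r0] by linarith
    then have zxz: "z w 0 \<bullet> (X 0 *\<^sub>v z w 0) > 0" using t0 by (simp add: zero_less_mult_iff)
    have "p 0 * (z w 0 \<bullet> (X 0 *\<^sub>v z w 0)) \<le> (\<Sum>i<r. p i * (z w i \<bullet> (X i *\<^sub>v z w i)))"
    proof (rule member_le_sum)
      fix i assume "i \<in> {..<r} - {0}"
      then have i: "i < r" by simp
      show "0 \<le> p i * (z w i \<bullet> (X i *\<^sub>v z w i))"
        using p_pos[OF i] zXz[OF w i] by simp
    qed (use r0 in auto)
    moreover have "0 < p 0 * (z w 0 \<bullet> (X 0 *\<^sub>v z w 0))" using p_pos[OF r0] zxz by simp
    ultimately have "w \<bullet> (L *\<^sub>v w) > 0" unfolding Lq[OF w] by linarith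
    then have "(\<Sum>k\<in>{0..<n}. dL k * (col QL k \<bullet> w)^2) \<noteq> 0"
      unfolding Ld spec_quad[OF QL QLTQL QLQLT w] by simp
    then have sne: "(\<Sum>k\<in>{0..<n}. dL k * (col QL k \<bullet> w)^2) \<noteq> 0" .
    obtain k' where k': "k' < n" and dl: "dL k' \<noteq> 0"
    proof (rule ccontr)
      assume "\<not> thesis"
      then have "\<forall>k<n. dL k = 0" using that by blast
      then have "(\<Sum>k\<in>{0..<n}. dL k * (col QL k \<bullet> w)^2) = 0" by simp
      then show False using sne by simp
    qed
    have "eigenvalue L (dL k')" unfolding Ld by (rule spec_eigenvalue[OF QL QLTQL QLQLT k'])
    then have "dL k' \<in> EL" unfolding EL_def using dl by simp
    then show ?thesis by auto
  qed
  have "Min EL \<in> EL" using fEL neEL by (rule Min_in)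
  then have "Min EM / T \<le> Min EL" by (rule main)
  then have "lambda_min_plus M / T \<le> lambda_min_plus L" unfolding lambda_min_plus_def EL_def EM_def .
  then show ?thesis unfolding L_def W_def Mi_def X_def B_def T_def M_def Sb_def .
qed

end
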